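(* Let $n$ be odd and let $q\ge 4$ be even. For every $w\in\mathbb{Z}_q^n$ there exists an ordering $G(0),G(1),\ldots,G(q^n-q-1)$ of the set $\mathbb{Z}_q^n\setminus\{w+(i,i,\ldots,i): 0\le i<q\}$ such that $G(j)$ and $G(j+1)$ are at Lee distance $1$ for all $0\le j<q^n-q-1$, and $G((j+q^{n-1}-1)\bmod (q^n-q)) = G(j)+(1,1,\ldots,1)$ for all $j$ (addition of words in $\mathbb{Z}_q^n$).
   Context: The Lee distance between $v=(v_1,\ldots,v_n)$ and $u=(u_1,\ldots,u_n)$ in $\mathbb{Z}_q^n$ is $\sum_{i=1}^n \min\{|v_i-u_i|,\,q-|v_i-u_i|\}$, where $v_i,u_i$ are regarded as integers in $\{0,\ldots,q-1\}$. (Such an ordering is a quasi-complementary Lee metric Gray code of $q$-ary $n$-tuples missing the $q$ words $w+(i,\ldots,i)$.) *)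

theory Defs
  imports Main
begin

text \<open>Words of Z_q^n are represented as functions nat => nat with
  entries in {0..<q} at positions < n and 0 at positions >= n.\<close>

definition words :: "nat \<Rightarrow> nat \<Rightarrow> (nat \<Rightarrow> nat) set" where
  "words q n = {v. (\<forall>k<n. v k < q) \<and> (\<forall>k\<ge>n. v k = 0)}"

definition word_add :: "nat \<Rightarrow> nat \<Rightarrow> (nat \<Rightarrow> nat) \<Rightarrow> (nat \<Rightarrow> nat) \<Rightarrow> (nat \<Rightarrow> nat)" where
  "word_add q n u v = (\<lambda>k. if k < n then (u k + v k) mod q else 0)"

definition const_word :: "nat \<Rightarrow> nat \<Rightarrow> (nat \<Rightarrow> nat)" where
  "const_word n i = (\<lambda>k. if k < n then i else 0)"

definition lee_dist :: "nat \<Rightarrow> nat \<Rightarrow> (nat \<Rightarrow> nat) \<Rightarrow> (nat \<Rightarrow> nat) \<Rightarrow> nat" where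
  "lee_dist q n v u =
     (\<Sum>k<n. let d = nat \<bar>int (v k) - int (u k)\<bar> in min d (q - d))"

end

theory Submission
  imports Defs "HOL-Library.FuncSet" "HOL-Number_Theory.Cong"
begin


definition dd :: "nat \<Rightarrow> nat \<Rightarrow> nat \<Rightarrow> nat" where
  "dd q a b = (let d = nat \<bar>int a - int b\<bar> in min d (q - d))"

lemma lee_dd: "lee_dist q n v u = (\<Sum>k<n. dd q (v k) (u k))"
  by (simp add: lee_dist_def dd_def)

lemma dd_shift:
  assumes "a < q" "b < q" "c < q"
  shows "dd q ((c + a) mod q) ((c + b) mod q) = dd q a b"
proof -
  have ea: "(c + a) mod q = (if c + a < q then c + a else c + a - q)"
    using assms by (simp add: mod_if)
  have eb: "(c + b) mod q = (if c + b < q then c + b else c + b - q)"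
    using assms by (simp add: mod_if)
  show ?thesis unfolding ea eb dd_def Let_def
    using assms by (auto simp: min_def split: if_splits) 
qed

lemma dd_same[simp]: "dd q a a = 0" by (simp add: dd_def)
lemma dd_sym: "dd q a b = dd q b a" by (simp add: dd_def abs_minus_commute)
lemma dd_suc: "q \<ge> 2 \<Longrightarrow> dd q a (Suc a) = 1" by (simp add: dd_def)
lemma dd_suc2: "q \<ge> 2 \<Longrightarrow> dd q (Suc a) a = 1" by (simp add: dd_def)



lemma words_iff: "v \<in> words q n \<longleftrightarrow> (\<forall>k<n. v k < q) \<and> (\<forall>k\<ge>n. v k = 0)"
  by (simp add: words_def)

lemma word_add_words: "0 < q \<Longrightarrow> word_add q n u v \<in> words q n"
  by (simp add: words_def word_add_def)

lemma const_words: "i < q \<Longrightarrow> const_word n i \<in> words q n"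
  by (simp add: words_def const_word_def)

lemma word_add_apply: "word_add q n u v k = (if k < n then (u k + v k) mod q else 0)"
  by (simp add: word_add_def)

lemma lee_shift:
  assumes "\<forall>k<n. w k < q" "\<forall>k<n. u k < q" "\<forall>k<n. v k < q"
  shows "lee_dist q n (word_add q n w u) (word_add q n w v) = lee_dist q n u v"
  unfolding lee_dd
  by (rule sum.cong) (auto simp: word_add_def assms dd_shift)

lemma lee_shift_r:
  assumes "\<forall>k<n. w k < q" "\<forall>k<n. u k < q" "\<forall>k<n. v k < q"
  shows "lee_dist q n (word_add q n u w) (word_add q n v w) = lee_dist q n u v"
proof -
  have "word_add q n u w = word_add q n w u" "word_add q n v w = word_add q n w v"
    by (auto simp: word_add_def add.commute)
  thus ?thesis using lee_shift[OF assms] by simp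
qed

lemma lee_sym: "lee_dist q n u v = lee_dist q n v u"
  unfolding lee_dd by (rule sum.cong) (auto simp: dd_sym)

lemma lee_self[simp]: "lee_dist q n u u = 0"
  unfolding lee_dd by simp

lemma word_add_const_const:
  "word_add q n (word_add q n v (const_word n a)) (const_word n b) = word_add q n v (const_word n (a + b))"
  by (auto simp: word_add_def const_word_def mod_add_left_eq add.assoc)

lemma word_add_const_mod:
  "word_add q n v (const_word n (a mod q)) = word_add q n v (const_word n a)"
  by (auto simp: word_add_def const_word_def mod_add_right_eq)

lemma word_add_const0:
  "v \<in> words q n \<Longrightarrow> word_add q n v (const_word n 0) = v"
  by (auto simp: word_add_def const_word_def words_def)

lemma word_add_constq:
  "v \<in> words q n \<Longrightarrow> word_add q n v (const_word n q) = v"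
  using word_add_const_mod[of q n v q] word_add_const0[of v q n] by simp

lemma word_add_cancel_const:
  assumes "u \<in> words q n" "v \<in> words q n"
    "word_add q n u (const_word n r) = word_add q n v (const_word n r)"
  shows "u = v"
proof
  fix k
  show "u k = v k"
  proof (cases "k < n")
    case True
    have "(u k + r) mod q = (v k + r) mod q"
      using assms(3) True by (metis word_add_apply const_word_def)
    hence "u k mod q = v k mod q" using cong_add_rcancel_nat[of "u k" r "v k" q] by (simp add: cong_def)
    thus ?thesis using assms True by (simp add: words_def)
  next
    case False thus ?thesis using assms by (simp add: words_def)
  qed
qed



lemma words_image: "words q n = (\<lambda>f k. if k < n then f k else 0) ` PiE {..<n} (\<lambda>_. {..<q})"
proof (rule set_eqI, rule iffI)
  fix v assume v: "v \<in> words q n"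
  let ?f = "restrict v {..<n}"
  have "?f \<in> PiE {..<n} (\<lambda>_. {..<q})" using v by (auto simp: words_def)
  moreover have "v = (\<lambda>k. if k < n then ?f k else 0)" using v by (auto simp: words_def)
  ultimately show "v \<in> (\<lambda>f k. if k < n then f k else 0) ` PiE {..<n} (\<lambda>_. {..<q})" by blast
next
  fix v assume "v \<in> (\<lambda>f k. if k < n then f k else 0) ` PiE {..<n} (\<lambda>_. {..<q})"
  thus "v \<in> words q n" by (auto simp: words_def PiE_def Pi_def)
qed

lemma card_words: "card (words q n) = q ^ n" and finite_words: "finite (words q n)"
proof -
  have inj: "inj_on (\<lambda>f k. if k < n then f k else 0) (PiE {..<n} (\<lambda>_. {..<q}))"
  proof (rule inj_onI)
    fix f g assume f: "f \<in> PiE {..<n} (\<lambda>_. {..<q})" and g: "g \<in> PiE {..<n} (\<lambda>_. {..<q})"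
      and e: "(\<lambda>k. if k < n then f k else 0) = (\<lambda>k. if k < n then g k else 0)"
    show "f = g"
    proof (rule PiE_ext[OF f g])
      fix k assume "k \<in> {..<n}" thus "f k = g k" using fun_cong[OF e, of k] by simp
    qed
  qed
  show "card (words q n) = q ^ n"
    unfolding words_image card_image[OF inj] by (simp add: card_PiE)
  show "finite (words q n)" unfolding words_image by (simp add: finite_PiE)
qed

definition diag :: "nat \<Rightarrow> nat \<Rightarrow> (nat \<Rightarrow> nat) set" where
  "diag q n = {const_word n i | i. i < q}"

lemma diag_sub: "diag q n \<subseteq> words q n"
  by (auto simp: diag_def const_words)

lemma card_diag: assumes "n \<ge> 1" shows "card (diag q n) = q"
proof -
  have "diag q n = const_word n ` {..<q}" by (auto simp: diag_def)
  moreover have "inj_on (const_word n) {..<q}"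
    by (rule inj_onI) (metis assms const_word_def less_le_trans zero_less_one)
  ultimately show ?thesis by (simp add: card_image)
qed

lemma card_target: "n \<ge> 1 \<Longrightarrow> card (words q n - diag q n) = q ^ n - q"
  by (simp add: card_Diff_subset diag_sub card_words card_diag finite_subset[OF diag_sub finite_words])

lemma finite_target: "finite (words q n - diag q n)"
  by (simp add: finite_words)

definition good :: "nat \<Rightarrow> nat \<Rightarrow> (nat \<Rightarrow> nat \<Rightarrow> nat) \<Rightarrow> bool" where
  "good q n G \<longleftrightarrow> bij_betw G {0..<q ^ n - q} (words q n - diag q n) \<and>
           (\<forall>j. j + 1 < q ^ n - q \<longrightarrow> lee_dist q n (G j) (G (j + 1)) = 1) \<and>
           (\<forall>j < q ^ n - q.
              G ((j + q ^ (n - 1) - 1) mod (q ^ n - q)) = word_add q n (G j) (const_word n 1))"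

lemma const_bound: "i < q \<Longrightarrow> \<forall>k<n. const_word n i k < q"
  by (simp add: const_word_def)

lemma words_bound: "v \<in> words q n \<Longrightarrow> \<forall>k<n. v k < q"
  by (simp add: words_def)

lemma lift:
  fixes q m M2 :: nat and R :: "nat \<Rightarrow> nat \<Rightarrow> nat"
  assumes q: "q \<ge> 2" and m: "m \<ge> 1" and eqN: "q ^ m - q = q * M2" and eqM: "q ^ (m - 1) - 1 = M2"
    and R1: "\<forall>i<M2. R i \<in> words q m"
    and R2: "\<forall>i<M2. \<forall>r<q. word_add q m (R i) (const_word m r) \<notin> diag q m"
    and R3: "\<forall>i i' r r'. i < M2 \<longrightarrow> i' < M2 \<longrightarrow> r < q \<longrightarrow> r' < q \<longrightarrow>
        word_add q m (R i) (const_word m r) = word_add q m (R i') (const_word m r') \<longrightarrow> i = i' \<and> r = r'"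
    and R4: "\<forall>i. i + 1 < M2 \<longrightarrow> lee_dist q m (R i) (R (i + 1)) = 1"
    and R5: "M2 > 0 \<longrightarrow> lee_dist q m (R (M2 - 1)) (word_add q m (R 0) (const_word m 1)) = 1"
  shows "good q m (\<lambda>j. word_add q m (R (j mod M2)) (const_word m (j div M2)))"
proof -
  define G where "G = (\<lambda>j. word_add q m (R (j mod M2)) (const_word m (j div M2)))"
  have q0: "q > 0" using q by simp
  have inj: "inj_on G {0..<q * M2}"
  proof (rule inj_onI)
    fix j j' assume j: "j \<in> {0..<q * M2}" and j': "j' \<in> {0..<q * M2}" and e: "G j = G j'"
    have M0: "M2 > 0" using j by (cases "M2 = 0") auto
    have "j div M2 < q" "j' div M2 < q" using j j' by (auto intro!: less_mult_imp_div_less simp: mult.commute)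
    moreover have "j mod M2 < M2" "j' mod M2 < M2" using M0 by auto
    ultimately have "j mod M2 = j' mod M2 \<and> j div M2 = j' div M2"
      using R3 e unfolding G_def by blast
    thus "j = j'" by (metis div_mult_mod_eq)
  qed
  have img: "G ` {0..<q * M2} \<subseteq> words q m - diag q m"
  proof
    fix v assume "v \<in> G ` {0..<q * M2}"
    then obtain j where j: "j < q * M2" and v: "v = G j" by auto
    have M0: "M2 > 0" using j by (cases "M2 = 0") auto
    have "j div M2 < q" using j by (auto intro!: less_mult_imp_div_less simp: mult.commute)
    thus "v \<in> words q m - diag q m" using R2 M0 v word_add_words[OF q0] unfolding G_def by auto
  qed
  have bij: "bij_betw G {0..<q ^ m - q} (words q m - diag q m)"
    unfolding eqN bij_betw_def
  proof
    show "inj_on G {0..<q * M2}" by (rule inj)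
    show "G ` {0..<q * M2} = words q m - diag q m"
      by (rule card_subset_eq[OF finite_target img])
         (simp add: card_image[OF inj] card_target[OF m] eqN)
  qed
  have Gw: "G j \<in> words q m" for j using word_add_words[OF q0] unfolding G_def by blast
  have adj: "lee_dist q m (G j) (G (j + 1)) = 1" if j: "j + 1 < q ^ m - q" for j
  proof -
    have j1: "j + 1 < q * M2" using j eqN by simp
    have M0: "M2 > 0" using j1 by (cases "M2 = 0") auto
    have d: "j div M2 < q" using j1 by (auto intro!: less_mult_imp_div_less simp: mult.commute)
    show ?thesis
    proof (cases "Suc (j mod M2) = M2")
      case False
      hence e1: "(j + 1) mod M2 = j mod M2 + 1" "(j + 1) div M2 = j div M2"
        by (simp_all add: mod_Suc div_Suc)
      have lt: "j mod M2 + 1 < M2" using M0 False by (metis Suc_eq_plus1 Suc_lessI mod_less_divisor)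
      hence l1: "lee_dist q m (R (j mod M2)) (R (j mod M2 + 1)) = 1" using R4 by blast
      have w1: "R (j mod M2) \<in> words q m" "R (j mod M2 + 1) \<in> words q m"
        using R1 M0 lt by auto
      have "lee_dist q m (G j) (G (j + 1)) = lee_dist q m (R (j mod M2)) (R (j mod M2 + 1))"
        unfolding G_def e1
        by (rule lee_shift_r) (use w1 d in \<open>auto simp: const_bound words_bound\<close>)
      thus ?thesis using l1 by simp
    next
      case True
      have jm: "j mod M2 = M2 - 1" using True by simp
      have jd: "(j + 1) div M2 = j div M2 + 1" "(j + 1) mod M2 = 0" using True
        by (simp_all add: mod_Suc div_Suc)
      have e2: "G (j + 1) = word_add q m (word_add q m (R 0) (const_word m 1)) (const_word m (j div M2))"
        unfolding G_def jd word_add_const_const by (simp add: add.commute)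
      have e3: "G j = word_add q m (R (M2 - 1)) (const_word m (j div M2))"
        unfolding G_def jm ..
      have w1: "R (M2 - 1) \<in> words q m" using R1 M0 by auto
      have w2: "word_add q m (R 0) (const_word m 1) \<in> words q m" using word_add_words q0 by blast
      have "lee_dist q m (G j) (G (j + 1)) = lee_dist q m (R (M2 - 1)) (word_add q m (R 0) (const_word m 1))"
        unfolding e2 e3
        by (rule lee_shift_r) (use w1 w2 d in \<open>auto simp: const_bound words_bound\<close>)
      thus ?thesis using R5 M0 by simp
    qed
  qed
  have shift: "G ((j + q ^ (m - 1) - 1) mod (q ^ m - q)) = word_add q m (G j) (const_word m 1)"
    if j: "j < q ^ m - q" for j
  proof -
    have j1: "j < q * M2" using j eqN by simp
    have M0: "M2 > 0" using j1 by (cases "M2 = 0") auto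
    have qm: "q ^ (m - 1) \<ge> 1" using q0 by simp
    have e: "j + q ^ (m - 1) - 1 = j + M2" using eqM qm by simp
    have d: "j div M2 < q" using j1 by (auto intro!: less_mult_imp_div_less simp: mult.commute)
    have rhs: "word_add q m (G j) (const_word m 1) = word_add q m (R (j mod M2)) (const_word m (j div M2 + 1))"
      unfolding G_def word_add_const_const ..
    show ?thesis
    proof (cases "j div M2 + 1 < q")
      case True
      have "j + M2 < q * M2"
      proof -
        have a: "j mod M2 < M2" using M0 by simp
        have b: "(j div M2 + 2) * M2 \<le> q * M2" using True by (intro mult_le_mono1) simp
        have b': "j div M2 * M2 + 2 * M2 \<le> q * M2" using b by (simp add: algebra_simps)
        show ?thesis using a b' div_mult_mod_eq[of j M2] by linarith
      qed
      moreover have "(j + M2) mod M2 = j mod M2" "(j + M2) div M2 = j div M2 + 1" using M0 by (auto simp: div_add_self2)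
      ultimately show ?thesis unfolding e eqN rhs by (simp add: G_def)
    next
      case False
      hence jd: "j div M2 = q - 1" using d by simp
      have qq: "(q - 1) * M2 + M2 = q * M2" using q0 by (cases q) auto
      have "j = (q - 1) * M2 + j mod M2" using div_mult_mod_eq[of j M2] unfolding jd by simp
      hence "j + M2 = q * M2 + j mod M2" using qq by linarith
      moreover have "j mod M2 < q * M2" using M0 q by (metis mod_less_divisor less_le_trans mult_le_mono1 mult_1 one_le_numeral order.trans)
      ultimately have e4: "(j + M2) mod (q * M2) = j mod M2" by simp
      have jm: "j mod M2 mod M2 = j mod M2" "j mod M2 div M2 = 0" using M0 by auto
      have qd: "j div M2 + 1 = q" using jd q0 by simp
      have w: "R (j mod M2) \<in> words q m" using R1 M0 by auto
      show ?thesis unfolding e eqN rhs e4 qd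
        unfolding G_def jm word_add_const0[OF w] word_add_constq[OF w] ..
    qed
  qed
  show ?thesis unfolding good_def G_def[symmetric] using bij adj shift by blast
qed



definition snake :: "nat \<Rightarrow> nat \<Rightarrow> nat \<times> nat" where
  "snake h p = (p div h, if even (p div h) then p mod h else h - 1 - p mod h)"

definition adjP :: "nat \<times> nat \<Rightarrow> nat \<times> nat \<Rightarrow> bool" where
  "adjP x y \<longleftrightarrow> (fst x = fst y \<and> (snd y = Suc (snd x) \<or> snd x = Suc (snd y))) \<or>
                 (snd x = snd y \<and> (fst y = Suc (fst x) \<or> fst x = Suc (fst y)))"

lemma adjP_sym: "adjP x y \<Longrightarrow> adjP y x"
  by (auto simp: adjP_def)

lemma snake_adj: assumes "h > 0" shows "adjP (snake h p) (snake h (Suc p))"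
proof (cases "Suc (p mod h) = h")
  case True
  hence "Suc p mod h = 0" "Suc p div h = Suc (p div h)" by (simp_all add: mod_Suc div_Suc)
  thus ?thesis using True unfolding snake_def adjP_def by auto
next
  case False
  hence "Suc p mod h = Suc (p mod h)" "Suc p div h = p div h" by (simp_all add: mod_Suc div_Suc)
  moreover have "p mod h < h" using assms by simp
  ultimately show ?thesis using False unfolding snake_def adjP_def by auto
qed

lemma snake_bound: assumes "p < w * h" shows "fst (snake h p) < w" "snd (snake h p) < h"
proof -
  have h: "h > 0" using assms by (cases "h = 0") auto
  show "fst (snake h p) < w" unfolding snake_def using assms
    by (auto intro!: less_mult_imp_div_less)
  show "snd (snake h p) < h" unfolding snake_def using h by auto
qed

lemma snake_inj: assumes "h > 0" "snake h p = snake h p'" shows "p = p'"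
proof -
  have d: "p div h = p' div h" using assms(2) by (simp add: snake_def)
  have a1: "p mod h < h" and a2: "p' mod h < h" using assms(1) by auto
  have "p mod h = p' mod h"
  proof (cases "even (p div h)")
    case True thus ?thesis using assms(2) d by (simp add: snake_def)
  next
    case False
    hence "h - 1 - p mod h = h - 1 - p' mod h" using assms(2) d by (simp add: snake_def)
    thus ?thesis using a1 a2 by linarith
  qed
  thus ?thesis using d by (metis div_mult_mod_eq)
qed

lemma snake_zero_iff: assumes "h > 0" shows "snake h p = (0, 0) \<longleftrightarrow> p = 0"
proof
  assume a: "snake h p = (0, 0)"
  hence "p div h = 0" by (simp add: snake_def)
  hence "p < h" using assms by (simp add: div_eq_0_iff)
  thus "p = 0" using a by (simp add: snake_def)
qed (simp add: snake_def)

lemma snake_last: assumes "h > 0" "w > 0"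
  shows "snake h (w * h - 1) = (w - 1, if even (w - 1) then h - 1 else 0)"
proof -
  have e: "w * h - 1 = (h - 1) + (w - 1) * h" using assms
    by (cases w; cases h) (auto simp: algebra_simps)
  have "(w * h - 1) div h = w - 1" unfolding e using assms by (subst div_mult_self1) auto
  moreover have "(w * h - 1) mod h = h - 1" unfolding e using assms by (subst mod_mult_self1) auto
  ultimately show ?thesis by (simp add: snake_def)
qed

lemma snake_one: "h \<ge> 2 \<Longrightarrow> snake h 1 = (0, 1)"
  by (simp add: snake_def)

text \<open>Path in the big grid: first column snake over columns below M, then row snake.\<close>
definition sp :: "nat \<Rightarrow> nat \<Rightarrow> nat \<Rightarrow> nat \<Rightarrow> nat \<times> nat" where
  "sp q M N p = (if p < M * q then snake q p
     else (M + snd (snake (N - M) (p - M * q)), q - 1 - fst (snake (N - M) (p - M * q))))"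

locale grid =
  fixes q M N :: nat
  assumes q2: "q \<ge> 2" and qeven: "even q" and Modd: "odd M" and MN: "M < N" and NqM: "N = q * M"
begin

lemma sp_bound: assumes "p < q * N" shows "fst (sp q M N p) < N" "snd (sp q M N p) < q"
proof -
  have "fst (sp q M N p) < N \<and> snd (sp q M N p) < q"
  proof (cases "p < M * q")
    case True
    thus ?thesis using snake_bound[OF True] MN by (simp add: sp_def)
  next
    case False
    have "p - M * q < q * (N - M)" using assms False NqM by (simp add: algebra_simps diff_mult_distrib2)
    note b = snake_bound[OF this]
    thus ?thesis using False MN q2 by (simp add: sp_def)
  qed
  thus "fst (sp q M N p) < N" "snd (sp q M N p) < q" by auto
qed

lemma sp_inj: assumes "p < q * N" "p' < q * N" "sp q M N p = sp q M N p'" shows "p = p'"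
proof -
  have q0: "q > 0" using q2 by simp
  have NM: "N - M > 0" using MN by simp
  show ?thesis
  proof (cases "p < M * q")
    case T1: True
    show ?thesis
    proof (cases "p' < M * q")
      case True thus ?thesis using T1 assms(3) snake_inj[OF q0] by (simp add: sp_def)
    next
      case False
      have "fst (sp q M N p) < M" using snake_bound[OF T1] T1 by (simp add: sp_def)
      moreover have "fst (sp q M N p') \<ge> M" using False by (simp add: sp_def)
      ultimately show ?thesis using assms(3) by simp
    qed
  next
    case F1: False
    show ?thesis
    proof (cases "p' < M * q")
      case True
      have "fst (sp q M N p') < M" using snake_bound[OF True] True by (simp add: sp_def)
      moreover have "fst (sp q M N p) \<ge> M" using F1 by (simp add: sp_def)
      ultimately show ?thesis using assms(3) by simp
    next
      case False
      have b1: "p - M * q < q * (N - M)" "p' - M * q < q * (N - M)"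
        using assms F1 False NqM by (simp_all add: algebra_simps diff_mult_distrib2)
      have "fst (snake (N - M) (p - M * q)) < q" "fst (snake (N - M) (p' - M * q)) < q"
        using snake_bound(1)[OF b1(1)] snake_bound(1)[OF b1(2)] by auto
      moreover have "snd (snake (N - M) (p - M * q)) = snd (snake (N - M) (p' - M * q))"
        "q - 1 - fst (snake (N - M) (p - M * q)) = q - 1 - fst (snake (N - M) (p' - M * q))"
        using F1 False assms(3) by (simp_all add: sp_def)
      ultimately have "snake (N - M) (p - M * q) = snake (N - M) (p' - M * q)"
        by (simp add: prod_eq_iff) linarith
      hence "p - M * q = p' - M * q" using snake_inj[OF NM] by blast
      thus ?thesis using F1 False by simp
    qed
  qed
qed

lemma sp_first: "sp q M N 0 = (0, 0)"
proof -
  have "0 < M * q" using Modd q2 by (cases M) auto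
  thus ?thesis by (simp add: sp_def snake_def)
qed

lemma sp_last: "sp q M N (q * N - 1) = (M, 0)"
proof -
  have q0: "q > 0" using q2 by simp
  have NM: "N - M > 0" using MN by simp
  have ge: "\<not> q * N - 1 < M * q"
  proof -
    have M0: "M \<ge> 1" using Modd by (cases M) auto
    have "q \<le> M * q" using M0 by simp
    moreover have "2 * (M * q) \<le> q * (M * q)" using q2 by (intro mult_le_mono1) 
    moreover have "q * N = q * (M * q)" using NqM by (simp add: mult.commute)
    ultimately have "M * q + q \<le> q * N" by linarith
    thus ?thesis using q0 by linarith
  qed
  have e: "q * N - 1 - M * q = q * (N - M) - 1" using NqM by (simp add: diff_mult_distrib2 algebra_simps)
  have "snake (N - M) (q * (N - M) - 1) = (q - 1, 0)"
    using snake_last[OF NM q0] qeven q2 by (simp add: mult.commute)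
  thus ?thesis using ge e q2 by (simp add: sp_def)
qed

lemma sp_adj: assumes "Suc p < q * N" shows "adjP (sp q M N p) (sp q M N (Suc p))"
proof -
  have q0: "q > 0" using q2 by simp
  have NM: "N - M > 0" using MN by simp
  consider (a) "Suc p < M * q" | (b) "Suc p = M * q" | (c) "p \<ge> M * q" by linarith
  thus ?thesis
  proof cases
    case a thus ?thesis using snake_adj[OF q0, of p] by (simp add: sp_def)
  next
    case b
    have M0: "M > 0" using Modd by (cases M) auto
    have pe: "p = M * q - 1" using b by simp
    have "snake q p = (M - 1, q - 1)"
      unfolding pe using snake_last[OF q0 M0] Modd by simp
    moreover have "snake (N - M) 0 = (0, 0)" by (simp add: snake_def)
    ultimately show ?thesis using b M0 by (simp add: sp_def adjP_def)
  next
    case c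
    have b1: "Suc (p - M * q) < (N - M) * q" using assms c NqM
      by (simp add: algebra_simps diff_mult_distrib2 diff_mult_distrib)
    have e: "Suc p - M * q = Suc (p - M * q)" using c by simp
    have A: "adjP (snake (N - M) (p - M * q)) (snake (N - M) (Suc (p - M * q)))"
      by (rule snake_adj[OF NM])
    have B: "fst (snake (N - M) (p - M * q)) < q" "fst (snake (N - M) (Suc (p - M * q))) < q"
      using snake_bound(1)[of _ q "N - M"] b1 by (auto simp: mult.commute)
    have C: "adjP (M + snd x, q - 1 - fst x) (M + snd y, q - 1 - fst y)"
      if "adjP x y" "fst x < q" "fst y < q" for x y
      using that by (cases x, cases y) (auto simp: adjP_def)
    have "\<not> Suc p < M * q" "\<not> p < M * q" using c by auto
    thus ?thesis using C[OF A B] unfolding sp_def e by simp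
  qed
qed

end



definition ext :: "nat \<Rightarrow> (nat \<Rightarrow> nat) \<Rightarrow> nat \<Rightarrow> nat \<Rightarrow> nat \<Rightarrow> nat" where
  "ext n v a b = (\<lambda>k. if k < n then v k else if k = n then a else if k = Suc n then b else 0)"

lemma ext_words: "v \<in> words q n \<Longrightarrow> a < q \<Longrightarrow> b < q \<Longrightarrow> ext n v a b \<in> words q (n + 2)"
  by (auto simp: words_def ext_def)

lemma lee_ext: "lee_dist q (n + 2) (ext n u a b) (ext n v c d) = lee_dist q n u v + dd q a c + dd q b d"
proof -
  have "lee_dist q (n + 2) (ext n u a b) (ext n v c d) = (\<Sum>k<Suc (Suc n). dd q (ext n u a b k) (ext n v c d k))"
    by (simp add: lee_dd)
  also have "... = (\<Sum>k<n. dd q (ext n u a b k) (ext n v c d k)) + dd q a c + dd q b d"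
    by (simp add: ext_def)
  also have "(\<Sum>k<n. dd q (ext n u a b k) (ext n v c d k)) = lee_dist q n u v"
    unfolding lee_dd by (rule sum.cong) (auto simp: ext_def)
  finally show ?thesis .
qed

lemma add_ext: "word_add q (n + 2) (ext n v a b) (const_word (n + 2) r) =
   ext n (word_add q n v (const_word n r)) ((a + r) mod q) ((b + r) mod q)"
  by (auto simp: word_add_def ext_def const_word_def)

lemma ext_eq: "ext n u a b = ext n v c d \<longleftrightarrow> (\<forall>k<n. u k = v k) \<and> a = c \<and> b = d"
proof
  assume e: "ext n u a b = ext n v c d"
  have "\<forall>k<n. u k = v k"
  proof (intro allI impI)
    fix k assume "k < n" thus "u k = v k" using fun_cong[OF e, of k] by (simp add: ext_def)
  qed
  moreover have "a = c" using fun_cong[OF e, of n] by (simp add: ext_def)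
  moreover have "b = d" using fun_cong[OF e, of "Suc n"] by (simp add: ext_def)
  ultimately show "(\<forall>k<n. u k = v k) \<and> a = c \<and> b = d" by blast
qed (auto simp: ext_def)

lemma const_ext: "const_word (n + 2) c = ext n (const_word n c) c c"
  by (auto simp: const_word_def ext_def)

lemma zero_ext: "(\<lambda>k. 0::nat) = ext n (\<lambda>k. 0) 0 0"
  by (auto simp: ext_def)

lemma zero_words: "(\<lambda>k. 0) \<in> words q n \<longleftrightarrow> (n = 0 \<or> q > 0)"
  by (auto simp: words_def)

lemma mod_cancel: "(a::nat) < q \<Longrightarrow> b < q \<Longrightarrow> (a + r) mod q = (b + r) mod q \<Longrightarrow> a = b"
  using cong_add_rcancel_nat[of a r b q] by (simp add: cong_def)

lemma mod_cancel2: "(a::nat) < q \<Longrightarrow> b < q \<Longrightarrow> (r + a) mod q = (r + b) mod q \<Longrightarrow> a = b"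
  using mod_cancel[of a q b r] by (simp add: add.commute)

lemma mod_solve: assumes "(x::nat) < q" "r < q" "(x + r) mod q = c" shows "x = (c + q - r) mod q"
proof (cases "x + r < q")
  case True
  hence "c = x + r" using assms(3) by simp
  hence "c + q - r = x + q" by simp
  thus ?thesis using assms(1) by simp
next
  case False
  have e: "x + r = (x + r - q) + q" using False by simp
  have "(x + r) mod q = (x + r - q) mod q" by (subst e) (simp only: mod_add_self2)
  also have "... = x + r - q" using assms(1,2) by simp
  finally have "c = x + r - q" using assms(3) by simp
  hence "c + q - r = x" using False by simp
  thus ?thesis using assms(1) by simp
qed

lemma diag_solve:
  assumes "v \<in> words q n" "r < q" "\<forall>k<n. (v k + r) mod q = c"
  shows "v \<in> diag q n"
proof -
  have q0: "q > 0" using assms(2) by simp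
  have "v = const_word n ((c + q - r) mod q)"
  proof
    fix k show "v k = const_word n ((c + q - r) mod q) k"
    proof (cases "k < n")
      case True
      have "v k < q" using assms(1) True by (simp add: words_def)
      moreover have "(v k + r) mod q = c" using assms(3) True by blast
      ultimately show ?thesis using mod_solve[of "v k" q r c] assms(2) True by (simp add: const_word_def)
    next
      case False thus ?thesis using assms(1) by (simp add: words_def const_word_def)
    qed
  qed
  thus ?thesis using q0 by (auto simp: diag_def)
qed

lemma adj_dd: assumes "adjP (a, b) (c, d)" "q \<ge> 2" shows "dd q a c + dd q b d = 1"
proof -
  consider "a = c" "d = Suc b" | "a = c" "b = Suc d" | "b = d" "c = Suc a" | "b = d" "a = Suc c"
    using assms(1) unfolding adjP_def by auto
  thus ?thesis
  proof cases
    case 1 thus ?thesis using dd_suc[OF assms(2), of b] by simp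
  next
    case 2 thus ?thesis using dd_suc2[OF assms(2), of d] by simp
  next
    case 3 thus ?thesis using dd_suc[OF assms(2), of a] by simp
  next
    case 4 thus ?thesis using dd_suc2[OF assms(2), of c] by simp
  qed
qed

lemma dd_01: "q \<ge> 2 \<Longrightarrow> dd q 0 1 = 1" using dd_suc[of q 0] by simp



lemma step:
  fixes q n :: nat and G :: "nat \<Rightarrow> nat \<Rightarrow> nat"
  assumes q4: "q \<ge> 4" and qe: "even q" and n: "odd n" and gd: "good q n G"
    and inv: "q ^ n - q = 0 \<or> lee_dist q n (G 0) (\<lambda>k. 0) = 1"
  shows "\<exists>G2. good q (n + 2) G2 \<and> lee_dist q (n + 2) (G2 0) (\<lambda>k. 0) = 1"
proof -
  have q2: "q \<ge> 2" and q0: "q > 0" and q1: "1 < q" using q4 by auto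
  have n1: "n \<ge> 1" using n by (cases n) auto
  define N where "N = q ^ n - q"
  define M where "M = q ^ (n - 1) - 1"
  define Zl where "Zl = q ^ 2 - 1"
  define M2 where "M2 = q ^ (n + 1) - 1"
  define z0 where "z0 = (\<lambda>k::nat. 0::nat)"
  have qn: "q ^ n = q * q ^ (n - 1)" using n1 by (metis Suc_diff_1 less_le_trans zero_less_one power_Suc)
  have qn1: "q ^ (n - 1) \<ge> 1" using q0 by simp
  have NM: "N = q * M" unfolding N_def M_def qn by (simp add: diff_mult_distrib2)
  have Pq: "q ^ n \<ge> q" using qn qn1 by simp
  have eq1: "q ^ (n + 2) - q = q * M2" unfolding M2_def by (simp add: diff_mult_distrib2)
  have eq2: "q ^ (n + 2 - 1) - 1 = M2" unfolding M2_def by simp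
  have eq3: "M2 = Zl + q * N"
  proof -
    have a: "q ^ (n + 1) = q * q ^ n" by simp
    have b: "q * q ^ n \<ge> q * q" using Pq by (rule mult_le_mono2)
    have c: "q * N = q * q ^ n - q * q" unfolding N_def by (simp add: diff_mult_distrib2)
    have d: "Zl = q * q - 1" unfolding Zl_def by (simp add: power2_eq_square)
    have e: "q * q \<ge> 1" using q0 by simp
    show ?thesis unfolding M2_def a c d using b e by linarith
  qed
  have Zl_pos: "Zl > 1"
  proof -
    have "q * q \<ge> 4 * 4" using mult_le_mono[OF q4 q4] .
    thus ?thesis unfolding Zl_def by (simp add: power2_eq_square)
  qed
  have gridN: "grid q M N" if "N > 0"
  proof
    show "q \<ge> 2" by (rule q2)
    show "even q" by (rule qe)
    have "n \<noteq> 1" using that unfolding N_def by auto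
    hence "n - 1 \<ge> 1" using n1 by simp
    hence "even (q ^ (n - 1))" using qe by simp
    thus "odd M" unfolding M_def using qn1 q0 by (simp add: even_diff_nat)
    show "N = q * M" by (rule NM)
    hence "M > 0" using that by simp
    thus "M < N" using NM q2 by simp
  qed
  have bijG: "bij_betw G {0..<N} (words q n - diag q n)" using gd unfolding good_def N_def by blast
  have Gw: "G L \<in> words q n" "G L \<notin> diag q n" if "L < N" for L
    using bij_betw_apply[OF bijG] that by auto
  have Ginj: "inj_on G {0..<N}" using bijG by (rule bij_betw_imp_inj_on)
  have Gadj: "lee_dist q n (G L) (G (L + 1)) = 1" if "L + 1 < N" for L
    using gd that unfolding good_def N_def by blast
  have GM: "G M = word_add q n (G 0) (const_word n 1)" if "N > 0"
  proof -
    have "M < N" using gridN[OF that] by (rule grid.MN)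
    hence "(0 + q ^ (n - 1) - 1) mod N = M" unfolding M_def by simp
    thus ?thesis using gd that unfolding good_def N_def by (metis N_def)
  qed
  have z0w: "z0 \<in> words q n" unfolding z0_def using q0 by (simp add: zero_words)
  define zp where "zp i = snake q (q ^ 2 - 1 - i)" for i
  define sq where "sq p = sp q M N p" for p
  have zp_b: "fst (zp i) < q" "snd (zp i) < q" if "i < Zl" for i
  proof -
    have "q ^ 2 - 1 - i < q * q" using q0 by (simp add: power2_eq_square)
    thus "fst (zp i) < q" "snd (zp i) < q" unfolding zp_def using snake_bound by blast+
  qed
  have zp_nz: "zp i \<noteq> (0, 0)" if "i < Zl" for i
  proof -
    have "q ^ 2 - 1 - i \<noteq> 0" using that unfolding Zl_def by simp
    thus ?thesis unfolding zp_def by (simp add: snake_zero_iff[OF q0])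
  qed
  have zp_inj: "i = i'" if "i < Zl" "i' < Zl" "zp i = zp i'" for i i'
  proof -
    have "q ^ 2 - 1 - i = q ^ 2 - 1 - i'" using snake_inj[OF q0] that(3) unfolding zp_def by blast
    thus ?thesis using that(1,2) unfolding Zl_def by linarith
  qed
  have zp_adj: "adjP (zp i) (zp (i + 1))" if "i + 1 < Zl" for i
  proof -
    have e: "q ^ 2 - 1 - i = Suc (q ^ 2 - 1 - (i + 1))" using that unfolding Zl_def by simp
    show ?thesis unfolding zp_def e by (rule adjP_sym) (rule snake_adj[OF q0])
  qed
  have zp0: "zp 0 = (q - 1, 0)"
  proof -
    have a: "q ^ 2 - 1 - 0 = q * q - 1" by (simp add: power2_eq_square)
    have b: "\<not> even (q - 1)" using qe q0 by simp
    show ?thesis unfolding zp_def a snake_last[OF q0 q0] using b by simp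
  qed
  have zpL: "zp (Zl - 1) = (0, 1)"
  proof -
    have "q ^ 2 - 1 - (Zl - 1) = 1" unfolding Zl_def using Zl_pos Zl_def by simp
    thus ?thesis unfolding zp_def using snake_one[OF q2] by simp
  qed
  define R where "R i = (if i < Zl then ext n z0 (fst (zp i)) (snd (zp i))
      else ext n (G (fst (sq (i - Zl)))) (snd (sq (i - Zl))) 1)" for i
  have SN: "N > 0" if "p < q * N" for p using that by (cases "N = 0") auto
  have sq_b: "fst (sq p) < N" "snd (sq p) < q" if "p < q * N" for p
    using grid.sp_bound[OF gridN[OF SN[OF that]] that] unfolding sq_def by auto
  have Sidx: "i - Zl < q * N" if "i < M2" "\<not> i < Zl" for i using that eq3 by simp
  have R1: "\<forall>i<M2. R i \<in> words q (n + 2)"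
  proof (intro allI impI)
    fix i assume i: "i < M2"
    show "R i \<in> words q (n + 2)"
    proof (cases "i < Zl")
      case True thus ?thesis unfolding R_def using ext_words[OF z0w] zp_b by simp
    next
      case False
      note p = Sidx[OF i False]
      show ?thesis unfolding R_def using False ext_words[OF Gw(1)[OF sq_b(1)[OF p]] sq_b(2)[OF p]] q2 by simp
    qed
  qed
  have sq_inj: "p = p'" if "p < q * N" "p' < q * N" "sq p = sq p'" for p p'
    using grid.sp_inj[OF gridN[OF SN[OF that(1)]] that(1,2)] that(3) unfolding sq_def by blast
  have Gz: "G L \<in> words q n" "\<forall>k<n. G L k < q" if "L < N" for L
    using Gw(1)[OF that] by (auto simp: words_def)
  have Rz: "R i = ext n z0 (fst (zp i)) (snd (zp i))" if "i < Zl" for i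
    using that unfolding R_def by simp
  have Rs: "R i = ext n (G (fst (sq (i - Zl)))) (snd (sq (i - Zl))) 1" if "\<not> i < Zl" for i
    using that unfolding R_def by simp
  have addz: "word_add q n z0 (const_word n r) = const_word n r" if "r < q" for r
    using that by (auto simp: word_add_def const_word_def z0_def)
  have R2: "\<forall>i<M2. \<forall>r<q. word_add q (n + 2) (R i) (const_word (n + 2) r) \<notin> diag q (n + 2)"
  proof (intro allI impI notI)
    fix i r assume i: "i < M2" and r: "r < q"
      and d: "word_add q (n + 2) (R i) (const_word (n + 2) r) \<in> diag q (n + 2)"
    then obtain c where c: "c < q" and e: "word_add q (n + 2) (R i) (const_word (n + 2) r) = const_word (n + 2) c"
      unfolding diag_def by blast
    show False
    proof (cases "i < Zl")
      case True
      have "ext n (const_word n r) ((fst (zp i) + r) mod q) ((snd (zp i) + r) mod q) = ext n (const_word n c) c c"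
        using e unfolding Rz[OF True] add_ext unfolding addz[OF r] const_ext .
      hence h: "\<forall>k<n. const_word n r k = const_word n c k" "(fst (zp i) + r) mod q = c" "(snd (zp i) + r) mod q = c"
        unfolding ext_eq by auto
      have "const_word n r 0 = const_word n c 0" using h(1) n1 by simp
      hence "r = c" using n1 by (simp add: const_word_def)
      hence "(fst (zp i) + r) mod q = (0 + r) mod q" "(snd (zp i) + r) mod q = (0 + r) mod q"
        using h r by auto
      hence "fst (zp i) = 0" "snd (zp i) = 0" using mod_cancel zp_b[OF True] q0 by blast+
      thus False using zp_nz[OF True] by (simp add: prod_eq_iff)
    next
      case False
      note p = Sidx[OF i False]
      define L where "L = fst (sq (i - Zl))"
      have L: "L < N" unfolding L_def using sq_b[OF p] by simp
      have "ext n (word_add q n (G L) (const_word n r)) ((snd (sq (i - Zl)) + r) mod q) ((1 + r) mod q) = ext n (const_word n c) c c"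
        using e unfolding Rs[OF False] add_ext unfolding const_ext L_def .
      hence "\<forall>k<n. word_add q n (G L) (const_word n r) k = const_word n c k" unfolding ext_eq by blast
      hence "\<forall>k<n. (G L k + r) mod q = c" by (simp add: word_add_def const_word_def)
      hence "G L \<in> diag q n" using diag_solve[OF Gz(1)[OF L] r] by blast
      thus False using Gw(2)[OF L] by blast
    qed
  qed
  have formZ: "word_add q (n + 2) (R i) (const_word (n + 2) r) =
      ext n (const_word n r) ((fst (zp i) + r) mod q) ((snd (zp i) + r) mod q)" if "i < Zl" "r < q" for i r
    unfolding Rz[OF that(1)] add_ext addz[OF that(2)] ..
  have formS: "word_add q (n + 2) (R i) (const_word (n + 2) r) =
      ext n (word_add q n (G (fst (sq (i - Zl)))) (const_word n r)) ((snd (sq (i - Zl)) + r) mod q) ((1 + r) mod q)"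
    if "\<not> i < Zl" for i r
    unfolding Rs[OF that(1)] add_ext ..
  have ZS: "False" if "i < Zl" "\<not> i' < Zl" "i' < M2" "r < q" "r' < q"
    "word_add q (n + 2) (R i) (const_word (n + 2) r) = word_add q (n + 2) (R i') (const_word (n + 2) r')" for i i' r r'
  proof -
    note p = Sidx[OF that(3,2)]
    define L where "L = fst (sq (i' - Zl))"
    have L: "L < N" unfolding L_def using sq_b[OF p] by simp
    have "\<forall>k<n. const_word n r k = word_add q n (G L) (const_word n r') k"
      using that(6) unfolding formZ[OF that(1,4)] formS[OF that(2)] ext_eq L_def by blast
    hence "\<forall>k<n. (G L k + r') mod q = r" by (simp add: word_add_def const_word_def)
    hence "G L \<in> diag q n" using diag_solve[OF Gz(1)[OF L] that(5)] by blast
    thus False using Gw(2)[OF L] by blast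
  qed
  have R3: "\<forall>i i' r r'. i < M2 \<longrightarrow> i' < M2 \<longrightarrow> r < q \<longrightarrow> r' < q \<longrightarrow>
        word_add q (n + 2) (R i) (const_word (n + 2) r) = word_add q (n + 2) (R i') (const_word (n + 2) r') \<longrightarrow> i = i' \<and> r = r'"
  proof (intro allI impI)
    fix i i' r r' assume i: "i < M2" and i': "i' < M2" and r: "r < q" and r': "r' < q"
      and e: "word_add q (n + 2) (R i) (const_word (n + 2) r) = word_add q (n + 2) (R i') (const_word (n + 2) r')"
    show "i = i' \<and> r = r'"
    proof (cases "i < Zl")
      case T1: True
      show ?thesis
      proof (cases "i' < Zl")
        case T2: True
        have h: "\<forall>k<n. const_word n r k = const_word n r' k"
          "(fst (zp i) + r) mod q = (fst (zp i') + r') mod q" "(snd (zp i) + r) mod q = (snd (zp i') + r') mod q"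
          using e unfolding formZ[OF T1 r] formZ[OF T2 r'] ext_eq by auto
        have "const_word n r 0 = const_word n r' 0" using h(1) n1 by simp
        hence rr: "r = r'" using n1 by (simp add: const_word_def)
        have "fst (zp i) = fst (zp i')" "snd (zp i) = snd (zp i')"
          using h(2,3) mod_cancel zp_b[OF T1] zp_b[OF T2] unfolding rr by blast+
        hence "zp i = zp i'" by (simp add: prod_eq_iff)
        thus ?thesis using zp_inj[OF T1 T2] rr by blast
      next
        case False thus ?thesis using ZS[OF T1 False i' r r' e] by blast
      qed
    next
      case F1: False
      show ?thesis
      proof (cases "i' < Zl")
        case True thus ?thesis using ZS[OF True F1 i r' r e[symmetric]] by blast
      next
        case F2: False
        note p = Sidx[OF i F1] and p' = Sidx[OF i' F2]
        define L where "L = fst (sq (i - Zl))"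
        define L' where "L' = fst (sq (i' - Zl))"
        have L: "L < N" "L' < N" unfolding L_def L'_def using sq_b[OF p] sq_b[OF p'] by auto
        have h: "\<forall>k<n. word_add q n (G L) (const_word n r) k = word_add q n (G L') (const_word n r') k"
          "(snd (sq (i - Zl)) + r) mod q = (snd (sq (i' - Zl)) + r') mod q" "(1 + r) mod q = (1 + r') mod q"
          using e unfolding formS[OF F1] formS[OF F2] ext_eq L_def L'_def by auto
        have rr: "r = r'" using mod_cancel2[OF r r' h(3)] .
        have "word_add q n (G L) (const_word n r) = word_add q n (G L') (const_word n r)"
        proof
          fix k show "word_add q n (G L) (const_word n r) k = word_add q n (G L') (const_word n r) k"
            using h(1) rr by (cases "k < n") (auto simp: word_add_def)
        qed
        hence "G L = G L'" using word_add_cancel_const Gz(1)[OF L(1)] Gz(1)[OF L(2)] by blast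
        hence LL: "L = L'" using Ginj L by (auto dest: inj_onD)
        have "snd (sq (i - Zl)) = snd (sq (i' - Zl))"
          using h(2) mod_cancel sq_b(2)[OF p] sq_b(2)[OF p'] unfolding rr by blast
        hence "sq (i - Zl) = sq (i' - Zl)" using LL unfolding L_def L'_def by (simp add: prod_eq_iff)
        hence "i - Zl = i' - Zl" using sq_inj[OF p p'] by blast
        thus ?thesis using F1 F2 rr by simp
      qed
    qed
  qed
  have Zl_M2: "Zl \<le> M2" using eq3 by simp
  have lz: "lee_dist q n z0 z0 = 0" by simp
  have R4: "\<forall>i. i + 1 < M2 \<longrightarrow> lee_dist q (n + 2) (R i) (R (i + 1)) = 1"
  proof (intro allI impI)
    fix i assume i: "i + 1 < M2"
    consider (a) "i + 1 < Zl" | (b) "i + 1 = Zl" | (c) "Zl \<le> i" by linarith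
    thus "lee_dist q (n + 2) (R i) (R (i + 1)) = 1"
    proof cases
      case a
      have "adjP (fst (zp i), snd (zp i)) (fst (zp (i + 1)), snd (zp (i + 1)))" using zp_adj[OF a] by simp
      hence "dd q (fst (zp i)) (fst (zp (i + 1))) + dd q (snd (zp i)) (snd (zp (i + 1))) = 1"
        using adj_dd q2 by blast
      moreover have ia: "i < Zl" using a by simp
      ultimately show ?thesis unfolding Rz[OF a] Rz[OF ia] lee_ext by simp
    next
      case b
      have Np: "N > 0" using i b eq3 by (cases "N = 0") auto
      have ie: "i = Zl - 1" using b by simp
      have ri: "R i = ext n z0 0 1" using zpL Rz[of i] Zl_pos unfolding ie by simp
      have ri1: "R (i + 1) = ext n (G 0) 0 1"
        using b Rs[of "i + 1"] grid.sp_first[OF gridN[OF Np]] unfolding sq_def by simp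
      have "lee_dist q n (G 0) z0 = 1" using inv Np unfolding N_def z0_def by simp
      hence "lee_dist q n z0 (G 0) = 1" using lee_sym[of q n z0 "G 0"] by simp
      thus ?thesis unfolding ri ri1 lee_ext by simp
    next
      case c
      have nz: "\<not> i < Zl" "\<not> i + 1 < Zl" using c by auto
      define p where "p = i - Zl"
      have ip: "i + 1 - Zl = Suc p" unfolding p_def using c by simp
      have p1: "Suc p < q * N" using i eq3 c unfolding p_def by simp
      have p0: "p < q * N" using p1 by simp
      have Np: "N > 0" using SN[OF p0] .
      have A: "adjP (sq p) (sq (Suc p))" using grid.sp_adj[OF gridN[OF Np] p1] unfolding sq_def .
      define L where "L = fst (sq p)"
      define L' where "L' = fst (sq (Suc p))"
      have LN: "L < N" "L' < N" unfolding L_def L'_def using sq_b[OF p0] sq_b[OF p1] by auto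
      have "lee_dist q n (G L) (G L') + dd q (snd (sq p)) (snd (sq (Suc p))) = 1"
      proof -
        consider "L = L'" "snd (sq (Suc p)) = Suc (snd (sq p)) \<or> snd (sq p) = Suc (snd (sq (Suc p)))"
          | "snd (sq p) = snd (sq (Suc p))" "L' = Suc L" | "snd (sq p) = snd (sq (Suc p))" "L = Suc L'"
          using A unfolding adjP_def L_def L'_def by blast
        thus ?thesis
        proof cases
          case 1 thus ?thesis using dd_suc[OF q2] dd_suc2[OF q2] by auto
        next
          case 2 thus ?thesis using Gadj[of L] LN by simp
        next
          case 3
          have "lee_dist q n (G L') (G (L' + 1)) = 1" using Gadj[of L'] LN 3 by simp
          hence "lee_dist q n (G L) (G L') = 1" using 3 lee_sym[of q n "G L" "G L'"] by simp
          thus ?thesis using 3 by simp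
        qed
      qed
      thus ?thesis unfolding Rs[OF nz(1)] Rs[OF nz(2)] ip lee_ext L_def L'_def p_def by simp
    qed
  qed
  have Zl0: "0 < Zl" using Zl_pos by simp
  have R0: "R 0 = ext n z0 (q - 1) 0" using Rz[OF Zl0] zp0 by simp
  have R01: "word_add q (n + 2) (R 0) (const_word (n + 2) 1) = ext n (const_word n 1) 0 1"
    using formZ[OF Zl0, of 1] q2 zp0 q0 by simp
  have R5: "M2 > 0 \<longrightarrow> lee_dist q (n + 2) (R (M2 - 1)) (word_add q (n + 2) (R 0) (const_word (n + 2) 1)) = 1"
  proof
    show "lee_dist q (n + 2) (R (M2 - 1)) (word_add q (n + 2) (R 0) (const_word (n + 2) 1)) = 1"
    proof (cases "N = 0")
      case True
      have "n = 1"
      proof (rule ccontr)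
        assume "n \<noteq> 1"
        hence "n \<ge> 2" using n1 by simp
        hence "q ^ 2 \<le> q ^ n" using q0 by (simp add: power_increasing)
        moreover have "q < q ^ 2" using q2 by (simp add: power2_eq_square)
        ultimately show False using True unfolding N_def by simp
      qed
      have m: "M2 - 1 = Zl - 1" using eq3 True by simp
      have r: "R (M2 - 1) = ext n z0 0 1" unfolding m using Rz[of "Zl - 1"] zpL Zl0 by simp
      have "lee_dist q n z0 (const_word n 1) = 1"
        using \<open>n = 1\<close> dd_01[OF q2] by (simp add: lee_dd z0_def const_word_def)
      thus ?thesis unfolding r R01 lee_ext by simp
    next
      case False
      hence Np: "N > 0" by simp
      have qN: "q * N > 0" using Np q0 by simp
      have m: "M2 - 1 - Zl = q * N - 1" using eq3 qN by linarith
      have nz: "\<not> M2 - 1 < Zl" using eq3 qN by linarith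
      have r: "R (M2 - 1) = ext n (G M) 0 1"
        using Rs[OF nz] grid.sp_last[OF gridN[OF Np]] unfolding m sq_def by simp
      have "lee_dist q n (G M) (const_word n 1) = lee_dist q n (word_add q n (G 0) (const_word n 1)) (word_add q n z0 (const_word n 1))"
        unfolding GM[OF Np] addz[OF q1] ..
      also have "... = lee_dist q n (G 0) z0"
        by (rule lee_shift_r) (use Gz[of 0] Np z0w q2 in \<open>auto simp: const_word_def words_def\<close>)
      also have "... = 1" using inv Np unfolding N_def z0_def by simp
      finally show ?thesis unfolding r R01 lee_ext by simp
    qed
  qed
  have good2: "good q (n + 2) (\<lambda>j. word_add q (n + 2) (R (j mod M2)) (const_word (n + 2) (j div M2)))"
    by (rule lift[OF q2 _ eq1 eq2 R1 R2 R3 R4 R5]) simp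
  have M2p: "M2 > 0" using Zl0 Zl_M2 by simp
  have "R 0 \<in> words q (n + 2)" using R1 M2p by blast
  hence g0: "word_add q (n + 2) (R (0 mod M2)) (const_word (n + 2) (0 div M2)) = R 0"
    by (simp add: word_add_const0)
  have zz: "(\<lambda>k. 0::nat) = ext n z0 0 0" by (auto simp: ext_def z0_def)
  have "dd q (q - 1) 0 = 1" using q2 by (simp add: dd_def)
  hence "lee_dist q (n + 2) (R 0) (\<lambda>k. 0) = 1" unfolding R0 zz lee_ext by simp
  thus ?thesis using good2 g0 by (intro exI[of _ "\<lambda>j. word_add q (n + 2) (R (j mod M2)) (const_word (n + 2) (j div M2))"]) simp
qed



lemma good_one: assumes "q \<ge> 1" shows "good q 1 G"
proof -
  have "words q 1 \<subseteq> diag q 1"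
  proof
    fix v assume v: "v \<in> words q 1"
    have "v = const_word 1 (v 0)"
    proof
      fix k show "v k = const_word 1 (v 0) k" using v by (cases "k = 0") (auto simp: words_def const_word_def)
    qed
    moreover have "v 0 < q" using v by (simp add: words_def)
    ultimately show "v \<in> diag q 1" unfolding diag_def by blast
  qed
  hence "words q 1 - diag q 1 = {}" by blast
  thus ?thesis unfolding good_def by (simp add: bij_betw_def)
qed

lemma all_good:
  assumes "q \<ge> 4" "even q"
  shows "\<exists>G. good q (2 * k + 1) G \<and> (q ^ (2 * k + 1) - q = 0 \<or> lee_dist q (2 * k + 1) (G 0) (\<lambda>k. 0) = 1)"
proof (induction k)
  case 0
  show ?case using good_one[of q] assms by auto
next
  case (Suc k)
  then obtain G where "good q (2 * k + 1) G" "q ^ (2 * k + 1) - q = 0 \<or> lee_dist q (2 * k + 1) (G 0) (\<lambda>k. 0) = 1"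
    by blast
  from step[OF assms _ this] obtain G2 where
    "good q (2 * k + 1 + 2) G2" "lee_dist q (2 * k + 1 + 2) (G2 0) (\<lambda>k. 0) = 1" by auto
  moreover have "2 * k + 1 + 2 = 2 * Suc k + 1" by simp
  ultimately show ?case by metis
qed

theorem theorem3:
  fixes n q :: nat and w :: "nat \<Rightarrow> nat"
  assumes "odd n" and "even q" and "q \<ge> 4" and "w \<in> words q n"
  shows "\<exists>G :: nat \<Rightarrow> (nat \<Rightarrow> nat).
           bij_betw G {0..<q ^ n - q}
             (words q n - {word_add q n w (const_word n i) | i. i < q}) \<and>
           (\<forall>j. j + 1 < q ^ n - q \<longrightarrow> lee_dist q n (G j) (G (j + 1)) = 1) \<and>
           (\<forall>j < q ^ n - q.
              G ((j + q ^ (n - 1) - 1) mod (q ^ n - q)) = word_add q n (G j) (const_word n 1))"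
proof -
  obtain k where nk: "n = 2 * k + 1" using assms(1) oddE by blast
  obtain G where gd: "good q n G" using all_good[OF assms(3,2), of k] nk by blast
  have q0: "q > 0" using assms(3) by simp
  define T where "T = word_add q n w"
  have wb: "\<forall>k<n. w k < q" using assms(4) by (simp add: words_def)
  have injT: "inj_on T (words q n)"
  proof (rule inj_onI)
    fix u v assume u: "u \<in> words q n" and v: "v \<in> words q n" and e: "T u = T v"
    show "u = v"
    proof
      fix k show "u k = v k"
      proof (cases "k < n")
        case True
        have "(w k + u k) mod q = (w k + v k) mod q" using fun_cong[OF e, of k] True by (simp add: T_def word_add_def)
        thus ?thesis using mod_cancel2 u v True by (auto simp: words_def)
      next
        case False thus ?thesis using u v by (simp add: words_def)
      qed
    qed
  qed
  have imgT: "T ` words q n = words q n"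
  proof
    show "T ` words q n \<subseteq> words q n" unfolding T_def using word_add_words[OF q0] by blast
    show "words q n \<subseteq> T ` words q n"
    proof
      fix v assume v: "v \<in> words q n"
      define u where "u = (\<lambda>k. if k < n then (v k + (q - w k)) mod q else 0)"
      have "u \<in> words q n" unfolding u_def using q0 by (simp add: words_def)
      moreover have "T u = v"
      proof
        fix k show "T u k = v k"
        proof (cases "k < n")
          case True
          have "T u k = (w k + (v k + (q - w k)) mod q) mod q" using True by (simp add: T_def word_add_def u_def)
          also have "... = (w k + (v k + (q - w k))) mod q" by (simp add: mod_add_right_eq)
          also have "w k + (v k + (q - w k)) = v k + q"
          proof -
            have "w k < q" using wb True by blast
            thus ?thesis by simp
          qed
          also have "(v k + q) mod q = v k" using v True by (simp add: words_def)
          finally show ?thesis .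
        next
          case False thus ?thesis using v by (simp add: T_def word_add_def words_def)
        qed
      qed
      ultimately show "v \<in> T ` words q n" by blast
    qed
  qed
  have imgD: "T ` diag q n = {word_add q n w (const_word n i) | i. i < q}"
    unfolding diag_def T_def by blast
  have bT: "bij_betw T (words q n - diag q n) (words q n - {word_add q n w (const_word n i) | i. i < q})"
    unfolding bij_betw_def
  proof
    show "inj_on T (words q n - diag q n)" using injT by (rule inj_on_subset) blast
    show "T ` (words q n - diag q n) = words q n - {word_add q n w (const_word n i) | i. i < q}"
      using inj_on_image_set_diff[OF injT _ diag_sub] imgT imgD by simp
  qed
  have bG: "bij_betw G {0..<q ^ n - q} (words q n - diag q n)" using gd unfolding good_def by blast
  have Gw: "G j \<in> words q n" if "j < q ^ n - q" for j using bij_betw_apply[OF bG] that by auto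
  show ?thesis
  proof (intro exI[of _ "T \<circ> G"] conjI allI impI)
    show "bij_betw (T \<circ> G) {0..<q ^ n - q} (words q n - {word_add q n w (const_word n i) | i. i < q})"
      using bij_betw_trans[OF bG bT] .
  next
    fix j assume j: "j + 1 < q ^ n - q"
    have "lee_dist q n ((T \<circ> G) j) ((T \<circ> G) (j + 1)) = lee_dist q n (G j) (G (j + 1))"
      unfolding comp_def T_def
      by (rule lee_shift) (use wb Gw[of j] Gw[of "j+1"] j in \<open>auto simp: words_def\<close>)
    also have "... = 1" using gd j unfolding good_def by blast
    finally show "lee_dist q n ((T \<circ> G) j) ((T \<circ> G) (j + 1)) = 1" .
  next
    fix j assume j: "j < q ^ n - q"
    have "(T \<circ> G) ((j + q ^ (n - 1) - 1) mod (q ^ n - q)) = T (word_add q n (G j) (const_word n 1))"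
      using gd j unfolding good_def by simp
    also have "... = word_add q n (T (G j)) (const_word n 1)"
    proof
      fix k show "T (word_add q n (G j) (const_word n 1)) k = word_add q n (T (G j)) (const_word n 1) k"
      proof (cases "k < n")
        case True
        have "(w k + (G j k + 1) mod q) mod q = ((w k + G j k) mod q + 1) mod q"
          by (simp add: mod_add_right_eq mod_add_left_eq add.assoc mod_Suc_eq)
        thus ?thesis using True by (simp add: T_def word_add_def const_word_def)
      next
        case False thus ?thesis by (simp add: T_def word_add_def)
      qed
    qed
    finally show "(T \<circ> G) ((j + q ^ (n - 1) - 1) mod (q ^ n - q)) = word_add q n ((T \<circ> G) j) (const_word n 1)"
      by simp
  qed
qed

end
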